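(* Let $V$ be a real Lorentzian vector space (signature $(1,q)$) of dimension $m=1+q\ge3$, and let $\nabla R$ be a covariant derivative algebraic curvature tensor on $V$. If $\operatorname{trace}\{\mathcal{S}_{\nabla R}(x)^2\}$ is constant for $x\in S^-(V)$, then $\mathcal{S}_{\nabla R}(x)=0$ for all $x\in V$.
   Context: A covariant derivative algebraic curvature tensor is $\nabla R\in\otimes^5V^*$ satisfying $\nabla R(a,b,c,d;e)=-\nabla R(b,a,c,d;e)=\nabla R(c,d,a,b;e)$, $\nabla R(a,b,c,d;e)+\nabla R(a,c,d,b;e)+\nabla R(a,d,b,c;e)=0$, and $\nabla R(a,b,c,d;e)+\nabla R(a,b,d,e;c)+\nabla R(a,b,e,c;d)=0$. The Szab\'o operator is defined by $(\mathcal{S}_{\nabla R}(x)y,w)=\nabla R(y,x,x,w;x)$. $S^-(V)=\{v\in V:(v,v)=-1\}$ is the set of unit timelike vectors. *)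

theory Defs
  imports "HOL-Analysis.Analysis"
begin

definition lorentzian :: "(real^'n \<Rightarrow> real^'n \<Rightarrow> real) \<Rightarrow> bool" where
  "lorentzian g \<longleftrightarrow>
     (\<forall>y. linear (\<lambda>x. g x y)) \<and> (\<forall>x y. g x y = g y x) \<and>
     (\<exists>(e :: 'n \<Rightarrow> real^'n) i0.
        independent (range e) \<and> inj e \<and> span (range e) = UNIV \<and>
        (\<forall>i j. g (e i) (e j) = (if i = j then (if i = i0 then -1 else 1) else 0)))"

definition multilinear5 ::
  "(real^'n \<Rightarrow> real^'n \<Rightarrow> real^'n \<Rightarrow> real^'n \<Rightarrow> real^'n \<Rightarrow> real) \<Rightarrow> bool" where
  "multilinear5 T \<longleftrightarrow>
     (\<forall>b c d e. linear (\<lambda>a. T a b c d e)) \<and>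
     (\<forall>a c d e. linear (\<lambda>b. T a b c d e)) \<and>
     (\<forall>a b d e. linear (\<lambda>c. T a b c d e)) \<and>
     (\<forall>a b c e. linear (\<lambda>d. T a b c d e)) \<and>
     (\<forall>a b c d. linear (\<lambda>e. T a b c d e))"

(* covariant derivative algebraic curvature tensor; DR a b c d e = nabla R(a,b,c,d;e) *)
definition cov_deriv_acT ::
  "(real^'n \<Rightarrow> real^'n \<Rightarrow> real^'n \<Rightarrow> real^'n \<Rightarrow> real^'n \<Rightarrow> real) \<Rightarrow> bool" where
  "cov_deriv_acT DR \<longleftrightarrow> multilinear5 DR \<and>
     (\<forall>a b c d e. DR a b c d e = - DR b a c d e) \<and>
     (\<forall>a b c d e. DR a b c d e = DR c d a b e) \<and>
     (\<forall>a b c d e. DR a b c d e + DR a c d b e + DR a d b c e = 0) \<and>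
     (\<forall>a b c d e. DR a b c d e + DR a b d e c + DR a b e c d = 0)"

definition szabo ::
  "(real^'n \<Rightarrow> real^'n \<Rightarrow> real) \<Rightarrow>
   (real^'n \<Rightarrow> real^'n \<Rightarrow> real^'n \<Rightarrow> real^'n \<Rightarrow> real^'n \<Rightarrow> real) \<Rightarrow>
   real^'n \<Rightarrow> (real^'n \<Rightarrow> real^'n)" where
  "szabo g DR x = (THE f. linear f \<and> (\<forall>y w. g (f y) w = DR y x x w x))"

definition lin_trace :: "(real^'n \<Rightarrow> real^'n) \<Rightarrow> real" where
  "lin_trace f = trace (matrix f)"

end

theory Submission imports Defs "HOL-Computational_Algebra.Polynomial" begin

lemma poly_zero_interval:
  fixes p :: "real poly"
  assumes "\<And>r. -1 < r \<Longrightarrow> r < 1 \<Longrightarrow> poly p r = 0"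
  shows "p = 0"
proof (rule ccontr)
  assume "p \<noteq> 0"
  then have "finite {x. poly p x = 0}" by (rule poly_roots_finite)
  moreover have "{-1<..<(1::real)} \<subseteq> {x. poly p x = 0}" using assms by auto
  ultimately have "finite {-1<..<(1::real)}" by (rule finite_subset[rotated])
  then show False using infinite_Ioo[of "-1::real" 1] by simp
qed

lemma coeff_cubsq: "coeff ([:ca, cb, cc, cd:]^2) 2 = cb * cb + 2 * (ca::real) * cc"
  by (simp add: power2_eq_square coeff_mult numeral_2_eq_2 atMost_Suc algebra_simps)

lemma poly_line:
  fixes w ca cb cc cd :: "'a \<Rightarrow> 'b \<Rightarrow> real" and A :: "'a set" and B :: "'b set" and c :: real
  assumes h: "\<And>r. -1 < r \<Longrightarrow> r < 1 \<Longrightarrow>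
     (\<Sum>b\<in>A. \<Sum>j\<in>B. w b j * (ca b j + r * cb b j + r^2 * cc b j + r^3 * cd b j)\<^sup>2) = c * (1 - r^2)^3"
  shows "\<And>r. (\<Sum>b\<in>A. \<Sum>j\<in>B. w b j * (ca b j + r * cb b j + r^2 * cc b j + r^3 * cd b j)\<^sup>2) = c * (1 - r^2)^3"
    and "(\<Sum>b\<in>A. \<Sum>j\<in>B. w b j * (cb b j * cb b j + 2 * ca b j * cc b j)) = -3 * c"
proof -
  define p where "p = (\<Sum>b\<in>A. \<Sum>j\<in>B. smult (w b j) ([:ca b j, cb b j, cc b j, cd b j:]^2))
     - smult c [:1, 0, -3, 0, 3, 0, -1:]"
  have pe: "poly p r = (\<Sum>b\<in>A. \<Sum>j\<in>B. w b j * (ca b j + r * cb b j + r^2 * cc b j + r^3 * cd b j)\<^sup>2) - c * (1 - r^2)^3" for r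
  proof -
    have 1: "poly ([:ca b j, cb b j, cc b j, cd b j:]^2) r = (ca b j + r * cb b j + r^2 * cc b j + r^3 * cd b j)\<^sup>2" for b j
      by (simp add: power2_eq_square eval_nat_numeral algebra_simps)
    have 2: "poly [:1, 0, -3, 0, 3, 0, -1:] r = (1 - r^2)^3"
      by (simp add: power2_eq_square eval_nat_numeral algebra_simps)
    show ?thesis by (simp only: p_def poly_diff poly_sum poly_smult 1 2)
  qed
  have "p = 0" by (rule poly_zero_interval) (simp add: pe h)
  then have pz: "\<And>r. poly p r = 0" by simp
  show "\<And>r. (\<Sum>b\<in>A. \<Sum>j\<in>B. w b j * (ca b j + r * cb b j + r^2 * cc b j + r^3 * cd b j)\<^sup>2) = c * (1 - r^2)^3"
    using pz pe by simp
  have "coeff p 2 = 0" using \<open>p = 0\<close> by simp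
  moreover have "coeff p 2 = (\<Sum>b\<in>A. \<Sum>j\<in>B. w b j * (cb b j * cb b j + 2 * ca b j * cc b j)) + 3 * c"
    by (simp add: p_def coeff_sum coeff_cubsq numeral_2_eq_2 algebra_simps)
  ultimately show "(\<Sum>b\<in>A. \<Sum>j\<in>B. w b j * (cb b j * cb b j + 2 * ca b j * cc b j)) = -3 * c" by simp
qed

lemma Q_ident:
  fixes N :: "'a::finite \<Rightarrow> 'a \<Rightarrow> real" and v :: "'a \<Rightarrow> real"
  assumes sym: "\<And>k l. N k l = N l k"
  defines "w \<equiv> (\<lambda>l. \<Sum>k\<in>UNIV. v k * N k l)"
  defines "vw \<equiv> (\<Sum>k\<in>UNIV. v k * w k)"
  defines "vv \<equiv> (\<Sum>k\<in>UNIV. v k * v k)"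
  shows "(\<Sum>k\<in>UNIV. \<Sum>l\<in>UNIV. (N k l - v k * w l - w k * v l + vw * v k * v l)\<^sup>2)
       = (\<Sum>k\<in>UNIV. \<Sum>l\<in>UNIV. (N k l)\<^sup>2) - 2 * (2 - vv) * (\<Sum>l\<in>UNIV. w l * w l) + (2 - vv)\<^sup>2 * vw\<^sup>2"
proof -
  have w2: "w k = (\<Sum>l\<in>UNIV. N k l * v l)" for k
    unfolding w_def by (rule sum.cong) (simp_all add: sym mult.commute)
  define WW where "WW = (\<Sum>l\<in>UNIV. w l * w l)"
  have sab: "(\<Sum>k\<in>UNIV. \<Sum>l\<in>UNIV. N k l * (v k * w l)) = WW"
  proof -
    have "(\<Sum>k\<in>UNIV. \<Sum>l\<in>UNIV. N k l * (v k * w l)) = (\<Sum>l\<in>UNIV. \<Sum>k\<in>UNIV. N k l * (v k * w l))"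
      by (rule sum.swap)
    also have "\<dots> = (\<Sum>l\<in>UNIV. w l * w l)"
      by (simp add: w_def sum_distrib_right mult_ac)
    finally show ?thesis by (simp add: WW_def)
  qed
  have sac: "(\<Sum>k\<in>UNIV. \<Sum>l\<in>UNIV. N k l * (w k * v l)) = WW"
    by (simp add: WW_def w2 sum_distrib_left mult_ac)
  have sad: "(\<Sum>k\<in>UNIV. \<Sum>l\<in>UNIV. N k l * (vw * v k * v l)) = vw * vw"
  proof -
    have "(\<Sum>k\<in>UNIV. \<Sum>l\<in>UNIV. N k l * (vw * v k * v l)) = vw * (\<Sum>k\<in>UNIV. v k * (\<Sum>l\<in>UNIV. N k l * v l))"
      by (simp add: sum_distrib_left mult_ac)
    also have "\<dots> = vw * vw" by (simp add: w2[symmetric] vw_def)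
    finally show ?thesis .
  qed
  have sbb: "(\<Sum>k\<in>UNIV. \<Sum>l\<in>UNIV. (v k * w l) * (v k * w l)) = vv * WW"
    by (simp add: vv_def WW_def sum_distrib_left sum_distrib_right mult_ac) (rule sum.swap)
  have scc: "(\<Sum>k\<in>UNIV. \<Sum>l\<in>UNIV. (w k * v l) * (w k * v l)) = vv * WW"
    by (simp add: vv_def WW_def sum_distrib_left sum_distrib_right mult_ac)
  have sdd: "(\<Sum>k\<in>UNIV. \<Sum>l\<in>UNIV. (vw * v k * v l) * (vw * v k * v l)) = vw * vw * vv * vv"
    by (simp add: vv_def sum_distrib_left sum_distrib_right mult_ac)
  have sbc: "(\<Sum>k\<in>UNIV. \<Sum>l\<in>UNIV. (v k * w l) * (w k * v l)) = vw * vw"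
    by (simp add: vw_def sum_distrib_left sum_distrib_right mult_ac)
  have sbd: "(\<Sum>k\<in>UNIV. \<Sum>l\<in>UNIV. (v k * w l) * (vw * v k * v l)) = vw * vw * vv"
  proof -
    have "(\<Sum>k\<in>UNIV. \<Sum>l\<in>UNIV. (v k * w l) * (vw * v k * v l)) = vw * (\<Sum>k\<in>UNIV. v k * v k) * (\<Sum>l\<in>UNIV. v l * w l)"
      by (simp add: sum_distrib_left sum_distrib_right mult_ac)
    then show ?thesis by (simp add: vv_def vw_def mult_ac)
  qed
  have scd: "(\<Sum>k\<in>UNIV. \<Sum>l\<in>UNIV. (w k * v l) * (vw * v k * v l)) = vw * vw * vv"
  proof -
    have "(\<Sum>k\<in>UNIV. \<Sum>l\<in>UNIV. (w k * v l) * (vw * v k * v l)) = vw * (\<Sum>k\<in>UNIV. v k * w k) * (\<Sum>l\<in>UNIV. v l * v l)"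
      by (simp add: sum_distrib_left sum_distrib_right mult_ac)
    then show ?thesis by (simp add: vv_def vw_def mult_ac)
  qed
  have expand: "(a - b - c + d)\<^sup>2 = a*a + b*b + c*c + d*d - 2*(a*b) - 2*(a*c) + 2*(a*d) + 2*(b*c) - 2*(b*d) - 2*(c*d)"
    for a b c d :: real by (simp add: power2_eq_square algebra_simps)
  have "(\<Sum>k\<in>UNIV. \<Sum>l\<in>UNIV. (N k l - v k * w l - w k * v l + vw * v k * v l)\<^sup>2)
      = (\<Sum>k\<in>UNIV. \<Sum>l\<in>UNIV. N k l * N k l) + vv * WW + vv * WW + vw * vw * vv * vv
        - 2 * WW - 2 * WW + 2 * (vw * vw) + 2 * (vw * vw) - 2 * (vw * vw * vv) - 2 * (vw * vw * vv)"
    by (simp only: expand sum.distrib sum_subtractf sum_distrib_left[symmetric] sab sac sad sbb scc sdd sbc sbd scd)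
  also have "\<dots> = (\<Sum>k\<in>UNIV. \<Sum>l\<in>UNIV. (N k l)\<^sup>2) - 2 * (2 - vv) * WW + (2 - vv)\<^sup>2 * vw\<^sup>2"
    by (simp add: power2_eq_square algebra_simps)
  finally show ?thesis by (simp add: WW_def)
qed

locale LS =
  fixes g :: "real^'n \<Rightarrow> real^'n \<Rightarrow> real"
    and DR :: "real^'n \<Rightarrow> real^'n \<Rightarrow> real^'n \<Rightarrow> real^'n \<Rightarrow> real^'n \<Rightarrow> real"
    and e :: "'n \<Rightarrow> real^'n" and i0 :: 'n
  assumes glin: "\<forall>y. linear (\<lambda>x. g x y)" and gsym: "\<forall>x y. g x y = g y x"
    and espan: "span (range e) = UNIV" and einj: "inj e"
    and eorth: "\<forall>i j. g (e i) (e j) = (if i = j then (if i = i0 then -1 else 1) else 0)"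
    and DRc: "cov_deriv_acT DR"
begin

definition eps :: "'n \<Rightarrow> real" where "eps i = (if i = i0 then -1 else 1)"

lemma eps_sq[simp]: "eps i * eps i = 1" by (simp add: eps_def)
lemma eps_i0[simp]: "eps i0 = -1" by (simp add: eps_def)
lemma eps_ne[simp]: "i \<noteq> i0 \<Longrightarrow> eps i = 1" by (simp add: eps_def)

lemma g_ee: "g (e i) (e j) = (if i = j then eps i else 0)"
  using eorth by (simp add: eps_def)

lemma g_add1: "g (a + b) y = g a y + g b y" using linear_add[OF glin[rule_format, of y]] by simp
lemma g_scale1: "g (r *\<^sub>R a) y = r * g a y" using linear_scale[OF glin[rule_format, of y]] by simp
lemma g_sum1: "g (sum h S) y = (\<Sum>i\<in>S. g (h i) y)" using linear_sum[OF glin[rule_format, of y]] by simp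
lemma g_sw: "g x y = g y x" using gsym by simp
lemma g_add2: "g y (a + b) = g y a + g y b"
  by (simp add: g_sw[of y] g_add1)
lemma g_scale2: "g y (r *\<^sub>R a) = r * g y a"
  by (simp add: g_sw[of y] g_scale1)
lemma g_sum2: "g y (sum h S) = (\<Sum>i\<in>S. g y (h i))"
  by (simp add: g_sw[of y] g_sum1)
lemma g_diff1: "g (a - b) y = g a y - g b y" using linear_diff[OF glin[rule_format, of y]] by simp
lemma g_diff2: "g y (a - b) = g y a - g y b"
  by (simp add: g_sw[of y] g_diff1)
lemma g_neg1: "g (- a) y = - g a y" using linear_neg[OF glin[rule_format, of y]] by simp
lemma g_neg2: "g y (- a) = - g y a"
  by (simp add: g_sw[of y] g_neg1)
lemma g_zero1[simp]: "g 0 y = 0" using linear_0[OF glin[rule_format, of y]] by simp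
lemma g_zero2[simp]: "g y 0 = 0" by (simp add: g_sw[of y])

lemmas g_lin = g_add1 g_scale1 g_sum1 g_add2 g_scale2 g_sum2 g_diff1 g_diff2 g_neg1 g_neg2

definition co :: "real^'n \<Rightarrow> 'n \<Rightarrow> real" where "co v i = eps i * g v (e i)"

lemma expand: "v = (\<Sum>i\<in>UNIV. co v i *\<^sub>R e i)"
proof -
  have "v \<in> span (range e)" using espan by simp
  then obtain u where u: "v = (\<Sum>w\<in>range e. u w *\<^sub>R w)"
    using span_finite[of "range e"] by auto
  have v2: "v = (\<Sum>i\<in>UNIV. u (e i) *\<^sub>R e i)"
    using u sum.reindex[OF einj, of "\<lambda>w. u w *\<^sub>R w"] by simp
  have "g v (e k) = u (e k) * eps k" for k
  proof -
    have "g v (e k) = (\<Sum>i\<in>UNIV. u (e i) * g (e i) (e k))"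
      by (subst v2) (simp add: g_sum1 g_scale1)
    also have "\<dots> = (\<Sum>i\<in>UNIV. if i = k then u (e k) * eps k else 0)"
      by (rule sum.cong) (auto simp: g_ee)
    finally show ?thesis by simp
  qed
  then have "co v k = u (e k)" for k
  proof -
    have "co v k = u (e k) * (eps k * eps k)"
      by (simp add: co_def \<open>g v (e k) = u (e k) * eps k\<close> mult_ac)
    then show ?thesis by simp
  qed
  then show ?thesis using v2 by simp
qed

lemma g_coord: "g v w = (\<Sum>i\<in>UNIV. eps i * co v i * co w i)"
proof -
  have "g v w = (\<Sum>i\<in>UNIV. co v i * g (e i) w)"
    by (subst expand[of v]) (simp add: g_sum1 g_scale1)
  also have "\<dots> = (\<Sum>i\<in>UNIV. eps i * co v i * co w i)"
  proof (rule sum.cong)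
    fix i
    have "g (e i) w = eps i * co w i"
      by (simp add: co_def gsym[rule_format, of "e i" w] mult.assoc[symmetric])
    then show "co v i * g (e i) w = eps i * co v i * co w i" by simp
  qed simp
  finally show ?thesis .
qed

lemma co_e: "co (e j) i = (if i = j then 1 else 0)"
  by (simp add: co_def g_ee)

lemma co_add: "co (a + b) i = co a i + co b i" by (simp add: co_def g_add1 algebra_simps)
lemma co_scale: "co (r *\<^sub>R a) i = r * co a i" by (simp add: co_def g_scale1 algebra_simps)
lemma co_sum: "co (sum h S) i = (\<Sum>j\<in>S. co (h j) i)" by (simp add: co_def g_sum1 sum_distrib_left)
lemma co_lin: "linear (\<lambda>v. co v i)"
  by (rule linearI) (simp_all add: co_add co_scale)

lemma orth_zero: assumes "\<And>w. g z w = 0" shows "z = 0"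
proof -
  have "co z i = 0" for i using assms by (simp add: co_def)
  then show ?thesis by (subst expand) simp
qed


lemma DRm: "multilinear5 DR" using DRc unfolding cov_deriv_acT_def by (elim conjE) assumption
lemma DR_l1: "linear (\<lambda>a. DR a b c d x)" using DRm by (simp add: multilinear5_def)
lemma DR_l2: "linear (\<lambda>b. DR a b c d x)" using DRm by (simp add: multilinear5_def)
lemma DR_l3: "linear (\<lambda>c. DR a b c d x)" using DRm by (simp add: multilinear5_def)
lemma DR_l4: "linear (\<lambda>d. DR a b c d x)" using DRm by (simp add: multilinear5_def)
lemma DR_l5: "linear (\<lambda>x. DR a b c d x)" using DRm by (simp add: multilinear5_def)

lemma DR_add1: "DR (a + a') b c d x = DR a b c d x + DR a' b c d x" using linear_add[OF DR_l1] by simp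
lemma DR_add2: "DR a (b + b') c d x = DR a b c d x + DR a b' c d x" using linear_add[OF DR_l2] by simp
lemma DR_add3: "DR a b (c + c') d x = DR a b c d x + DR a b c' d x" using linear_add[OF DR_l3] by simp
lemma DR_add4: "DR a b c (d + d') x = DR a b c d x + DR a b c d' x" using linear_add[OF DR_l4] by simp
lemma DR_add5: "DR a b c d (x + x') = DR a b c d x + DR a b c d x'" using linear_add[OF DR_l5] by simp
lemma DR_sc1: "DR (r *\<^sub>R a) b c d x = r * DR a b c d x" using linear_scale[OF DR_l1] by simp
lemma DR_sc2: "DR a (r *\<^sub>R b) c d x = r * DR a b c d x" using linear_scale[OF DR_l2] by simp
lemma DR_sc3: "DR a b (r *\<^sub>R c) d x = r * DR a b c d x" using linear_scale[OF DR_l3] by simp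
lemma DR_sc4: "DR a b c (r *\<^sub>R d) x = r * DR a b c d x" using linear_scale[OF DR_l4] by simp
lemma DR_sc5: "DR a b c d (r *\<^sub>R x) = r * DR a b c d x" using linear_scale[OF DR_l5] by simp
lemma DR_sum1: "DR (sum h S) b c d x = (\<Sum>i\<in>S. DR (h i) b c d x)" using linear_sum[OF DR_l1] by simp
lemma DR_sum4: "DR a b c (sum h S) x = (\<Sum>i\<in>S. DR a b c (h i) x)" using linear_sum[OF DR_l4] by simp
lemma DR_diff1: "DR (a - a') b c d x = DR a b c d x - DR a' b c d x" using linear_diff[OF DR_l1] by simp
lemma DR_diff2: "DR a (b - b') c d x = DR a b c d x - DR a b' c d x" using linear_diff[OF DR_l2] by simp
lemma DR_diff3: "DR a b (c - c') d x = DR a b c d x - DR a b c' d x" using linear_diff[OF DR_l3] by simp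
lemma DR_diff4: "DR a b c (d - d') x = DR a b c d x - DR a b c d' x" using linear_diff[OF DR_l4] by simp
lemma DR_diff5: "DR a b c d (x - x') = DR a b c d x - DR a b c d x'" using linear_diff[OF DR_l5] by simp
lemma DR_neg1: "DR (- a) b c d x = - DR a b c d x" using linear_neg[OF DR_l1] by simp
lemma DR_neg2: "DR a (- b) c d x = - DR a b c d x" using linear_neg[OF DR_l2] by simp
lemma DR_neg3: "DR a b (- c) d x = - DR a b c d x" using linear_neg[OF DR_l3] by simp
lemma DR_neg4: "DR a b c (- d) x = - DR a b c d x" using linear_neg[OF DR_l4] by simp
lemma DR_neg5: "DR a b c d (- x) = - DR a b c d x" using linear_neg[OF DR_l5] by simp

lemmas DR_lin = DR_add1 DR_add2 DR_add3 DR_add4 DR_add5 DR_sc1 DR_sc2 DR_sc3 DR_sc4 DR_sc5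
  DR_diff1 DR_diff2 DR_diff3 DR_diff4 DR_diff5 DR_neg1 DR_neg2 DR_neg3 DR_neg4 DR_neg5

lemma DR_as12_all: "\<forall>a b c d x. DR a b c d x = - DR b a c d x"
  using DRc unfolding cov_deriv_acT_def by (elim conjE) assumption
lemma DR_pair_all: "\<forall>a b c d x. DR a b c d x = DR c d a b x"
  using DRc unfolding cov_deriv_acT_def by (elim conjE) assumption
lemma DR_as12: "DR a b c d x = - DR b a c d x" by (rule DR_as12_all[rule_format])
lemma DR_pair: "DR a b c d x = DR c d a b x" by (rule DR_pair_all[rule_format])
lemma DR_as34: "DR a b c d x = - DR a b d c x"
proof -
  have "DR a b c d x = DR c d a b x" by (rule DR_pair)
  also have "\<dots> = - DR d c a b x" by (rule DR_as12)
  also have "DR d c a b x = DR a b d c x" by (rule DR_pair)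
  finally show ?thesis .
qed
lemma DR_aa[simp]: "DR a a c d x = 0" using DR_as12[of a a c d x] by simp
lemma DR_cc[simp]: "DR a b c c x = 0" using DR_as34[of a b c c x] by simp
lemma DR_symA: "DR w y y v y = DR v y y w y"
proof -
  have "DR w y y v y = DR y v w y y" by (rule DR_pair)
  also have "\<dots> = - DR v y w y y" by (rule DR_as12)
  also have "DR v y w y y = - DR v y y w y" by (rule DR_as34)
  finally show ?thesis by simp
qed

definition S :: "real^'n \<Rightarrow> real^'n \<Rightarrow> real^'n" where
  "S x y = (\<Sum>j\<in>UNIV. (eps j * DR y x x (e j) x) *\<^sub>R e j)"

lemma S_lin: "linear (S x)"
proof (rule linearI)
  fix a b :: "real^'n" and r :: real
  show "S x (a + b) = S x a + S x b"
    unfolding S_def by (simp add: DR_add1 distrib_left scaleR_add_left sum.distrib)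
  show "S x (r *\<^sub>R a) = r *\<^sub>R S x a"
    unfolding S_def by (simp add: DR_sc1 scaleR_sum_right mult.left_commute)
qed

lemma co_S: "co (S x y) j = eps j * DR y x x (e j) x"
  unfolding S_def by (simp add: co_sum co_scale co_e if_distrib cong: if_cong)

lemma g_S: "g (S x y) w = DR y x x w x"
proof -
  have "g (S x y) w = (\<Sum>j\<in>UNIV. eps j * co (S x y) j * co w j)" by (rule g_coord)
  also have "\<dots> = (\<Sum>j\<in>UNIV. co w j * DR y x x (e j) x)"
    by (rule sum.cong) (simp_all add: co_S mult_ac mult.assoc[symmetric])
  also have "\<dots> = DR y x x (\<Sum>j\<in>UNIV. co w j *\<^sub>R e j) x"
    by (simp add: DR_sum4 DR_sc4)
  also have "\<dots> = DR y x x w x" by (simp flip: expand)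
  finally show ?thesis .
qed

lemma szabo_S: "szabo g DR x = S x"
  unfolding szabo_def
proof (rule the_equality)
  show "linear (S x) \<and> (\<forall>y w. g (S x y) w = DR y x x w x)" using S_lin g_S by blast
next
  fix f assume f: "linear f \<and> (\<forall>y w. g (f y) w = DR y x x w x)"
  show "f = S x"
  proof
    fix y
    have "g (f y - S x y) w = 0" for w using f by (simp add: g_diff1 g_S)
    then have "f y - S x y = 0" by (rule orth_zero)
    then show "f y = S x y" by simp
  qed
qed

lemma vec_expand: "(\<Sum>r\<in>UNIV. (v $ r) *\<^sub>R axis r (1::real)) = (v::real^'n)"
  using basis_expansion[of v] by (simp add: scalar_mult_eq_scaleR)

lemma co_vec: "co v b = (\<Sum>r\<in>UNIV. (v $ r) * co (axis r 1) b)"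
proof -
  have "co v b = co (\<Sum>r\<in>UNIV. (v $ r) *\<^sub>R axis r (1::real)) b" by (simp only: vec_expand)
  also have "\<dots> = (\<Sum>r\<in>UNIV. (v $ r) * co (axis r 1) b)" by (simp add: co_sum co_scale)
  finally show ?thesis .
qed

lemma trace_basis:
  assumes lh: "linear h"
  shows "lin_trace h = (\<Sum>b\<in>UNIV. co (h (e b)) b)"
proof -
  define P :: "real^'n^'n" where "P = (\<chi> r b. e b $ r)"
  define Q :: "real^'n^'n" where "Q = (\<chi> b r. co (axis r 1) b)"
  have QP: "Q ** P = mat 1"
  proof -
    have "(Q ** P) $ b $ b' = mat 1 $ b $ b'" for b b'
    proof -
      have "(Q ** P) $ b $ b' = (\<Sum>r\<in>UNIV. co (axis r 1) b * (e b' $ r))"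
        by (simp add: matrix_matrix_mult_def P_def Q_def)
      also have "\<dots> = co (e b') b" by (simp add: co_vec[of "e b'"] mult.commute)
      also have "\<dots> = mat 1 $ b $ b'" by (simp add: co_e mat_def)
      finally show ?thesis .
    qed
    then show ?thesis by (simp add: vec_eq_iff)
  qed
  then have PQ: "P ** Q = mat 1" using matrix_left_right_inverse by blast
  have "lin_trace h = trace (matrix h)" by (simp add: lin_trace_def)
  also have "\<dots> = trace (matrix h ** (P ** Q))" by (simp add: PQ)
  also have "\<dots> = trace ((matrix h ** P) ** Q)" by (simp add: matrix_mul_assoc)
  also have "\<dots> = trace (Q ** (matrix h ** P))" by (rule trace_mul_sym)
  also have "\<dots> = (\<Sum>b\<in>UNIV. co (h (e b)) b)"
  proof -
    have hv: "matrix h *v v = h v" for v using matrix_vector_mul(2)[OF lh] by metis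
    have "(matrix h ** P) $ r $ b = h (e b) $ r" for r b
    proof -
      have "(matrix h ** P) $ r $ b = (\<Sum>s\<in>UNIV. matrix h $ r $ s * e b $ s)"
        by (simp add: matrix_matrix_mult_def P_def)
      also have "\<dots> = (matrix h *v e b) $ r" by (simp add: matrix_vector_mult_def)
      also have "\<dots> = h (e b) $ r" by (simp add: hv)
      finally show ?thesis .
    qed
    then have "(Q ** (matrix h ** P)) $ b $ b = co (h (e b)) b" for b
      by (simp add: matrix_matrix_mult_def Q_def co_vec[of "h (e b)"] mult.commute)
    then show ?thesis by (simp add: trace_def)
  qed
  finally show ?thesis .
qed

definition F :: "real^'n \<Rightarrow> real" where
  "F x = (\<Sum>b\<in>UNIV. \<Sum>j\<in>UNIV. eps b * eps j * (DR (e b) x x (e j) x)\<^sup>2)"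

lemma trace_F: "lin_trace (szabo g DR x \<circ> szabo g DR x) = F x"
proof -
  have lin: "linear (S x \<circ> S x)" using S_lin by (simp add: linear_compose)
  have "lin_trace (S x \<circ> S x) = (\<Sum>b\<in>UNIV. co (S x (S x (e b))) b)"
    using trace_basis[OF lin] by simp
  also have "\<dots> = F x"
    unfolding F_def
  proof (rule sum.cong[OF refl])
    fix b
    have "co (S x (S x (e b))) b = eps b * DR (S x (e b)) x x (e b) x" by (simp add: co_S)
    also have "DR (S x (e b)) x x (e b) x = (\<Sum>j\<in>UNIV. eps j * DR (e b) x x (e j) x * DR (e j) x x (e b) x)"
      by (simp add: S_def DR_sum1 DR_sc1)
    also have "\<dots> = (\<Sum>j\<in>UNIV. eps j * (DR (e b) x x (e j) x)\<^sup>2)"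
    proof (rule sum.cong[OF refl])
      fix j
      show "eps j * DR (e b) x x (e j) x * DR (e j) x x (e b) x = eps j * (DR (e b) x x (e j) x)\<^sup>2"
        using DR_symA[of "e j" x "e b"] by (simp add: power2_eq_square)
    qed
    finally show "co (S x (S x (e b))) b = (\<Sum>j\<in>UNIV. eps b * eps j * (DR (e b) x x (e j) x)\<^sup>2)"
      by (simp add: sum_distrib_left mult.assoc)
  qed
  finally show ?thesis by (simp add: szabo_S)
qed

definition X :: "real^'n" where "X = e i0"
definition vec :: "('n \<Rightarrow> real) \<Rightarrow> real^'n" where "vec v = (\<Sum>k\<in>UNIV. v k *\<^sub>R e k)"

lemma gXX: "g X X = -1" by (simp add: X_def g_ee)
lemma co_X: "co X i = (if i = i0 then 1 else 0)" by (simp add: X_def co_e)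
lemma co_vec': "co (vec v) i = v i"
  by (simp add: vec_def co_sum co_scale co_e if_distrib cong: if_cong)
lemma g_vec: "g (vec v) (vec w) = (\<Sum>i\<in>UNIV. eps i * v i * w i)"
  by (simp add: g_coord co_vec')
lemma g_vecX: "g (vec v) X = - v i0"
  by (simp add: g_coord co_vec' co_X if_distrib cong: if_cong)

lemma F_scale: "F (r *\<^sub>R x) = r^6 * F x"
proof -
  have "(DR (e b) (r *\<^sub>R x) (r *\<^sub>R x) (e j) (r *\<^sub>R x))\<^sup>2 = r^6 * (DR (e b) x x (e j) x)\<^sup>2" for b j
    by (simp add: DR_sc2 DR_sc3 DR_sc5 power2_eq_square eval_nat_numeral)
  then show ?thesis by (simp add: F_def sum_distrib_left mult_ac)
qed

lemma F_time:
  assumes hyp: "\<forall>x. g x x = -1 \<longrightarrow> F x = c" and gx: "g x x = - s" and s: "s > 0"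
  shows "F x = s^3 * c"
proof -
  define t where "t = sqrt s"
  have t: "t > 0" "t * t = s" using s by (simp_all add: t_def)
  define x' where "x' = (1 / t) *\<^sub>R x"
  have "g x' x' = (1/t) * (1/t) * g x x" by (simp add: x'_def g_scale1 g_scale2)
  also have "\<dots> = -1" using gx t s by (simp add: field_simps)
  finally have "F x' = c" using hyp by simp
  have "x = t *\<^sub>R x'" using t by (simp add: x'_def)
  then have "F x = t^6 * F x'" by (simp add: F_scale)
  also have "t^6 = s^3" using t(2) by (simp add: eval_nat_numeral mult_ac flip: t(2))
  finally show ?thesis using \<open>F x' = c\<close> by simp
qed

definition P0 :: "real^'n \<Rightarrow> real^'n \<Rightarrow> real" where "P0 y w = DR y X X w X"
definition P1 :: "real^'n \<Rightarrow> real^'n \<Rightarrow> real^'n \<Rightarrow> real" where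
  "P1 u y w = DR y u X w X + DR y X u w X + DR y X X w u"
definition P2 :: "real^'n \<Rightarrow> real^'n \<Rightarrow> real^'n \<Rightarrow> real" where
  "P2 u y w = DR y u u w X + DR y u X w u + DR y X u w u"
definition P3 :: "real^'n \<Rightarrow> real^'n \<Rightarrow> real^'n \<Rightarrow> real" where
  "P3 u y w = DR y u u w u"

lemma DR_line: "DR y (X + r *\<^sub>R u) (X + r *\<^sub>R u) w (X + r *\<^sub>R u)
   = P0 y w + r * P1 u y w + r^2 * P2 u y w + r^3 * P3 u y w"
  by (simp add: P0_def P1_def P2_def P3_def DR_add2 DR_add3 DR_add5 DR_sc2 DR_sc3 DR_sc5
      power2_eq_square eval_nat_numeral algebra_simps)

lemma line:
  assumes hyp: "\<forall>x. g x x = -1 \<longrightarrow> F x = c" and uX: "g u X = 0" and uu: "g u u = 1"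
  shows "F (X + r *\<^sub>R u) = c * (1 - r^2)^3"
    and "(\<Sum>b\<in>UNIV. \<Sum>j\<in>UNIV. (eps b * eps j) * (P1 u (e b) (e j) * P1 u (e b) (e j)
            + 2 * P0 (e b) (e j) * P2 u (e b) (e j))) = -3 * c"
proof -
  have FX: "F (X + r *\<^sub>R u) = (\<Sum>b\<in>UNIV. \<Sum>j\<in>UNIV. (eps b * eps j) *
     (P0 (e b) (e j) + r * P1 u (e b) (e j) + r^2 * P2 u (e b) (e j) + r^3 * P3 u (e b) (e j))\<^sup>2)" for r
    by (simp add: F_def DR_line)
  have Xu: "g X u = 0" using uX by (simp add: g_sw[of X])
  have "F (X + r *\<^sub>R u) = c * (1 - r^2)^3" if "-1 < r" "r < 1" for r
  proof -
    have "g (X + r *\<^sub>R u) (X + r *\<^sub>R u) = - (1 - r^2)"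
      by (simp add: g_add1 g_add2 g_scale1 g_scale2 gXX uX Xu uu power2_eq_square)
    moreover have "1 - r^2 > 0" using that by (simp add: abs_square_less_1)
    ultimately show ?thesis using F_time[OF hyp] by (simp add: mult.commute)
  qed
  then have h: "\<And>r. -1 < r \<Longrightarrow> r < 1 \<Longrightarrow> (\<Sum>b\<in>UNIV. \<Sum>j\<in>UNIV. (eps b * eps j) *
     (P0 (e b) (e j) + r * P1 u (e b) (e j) + r^2 * P2 u (e b) (e j) + r^3 * P3 u (e b) (e j))\<^sup>2) = c * (1 - r^2)^3"
    using FX by simp
  note pl = poly_line[where w="\<lambda>b j. eps b * eps j" and ca="\<lambda>b j. P0 (e b) (e j)"
      and cb="\<lambda>b j. P1 u (e b) (e j)" and cc="\<lambda>b j. P2 u (e b) (e j)" and cd="\<lambda>b j. P3 u (e b) (e j)",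
      OF h]
  show "F (X + r *\<^sub>R u) = c * (1 - r^2)^3" using pl(1) FX by simp
  show "(\<Sum>b\<in>UNIV. \<Sum>j\<in>UNIV. (eps b * eps j) * (P1 u (e b) (e j) * P1 u (e b) (e j)
            + 2 * P0 (e b) (e j) * P2 u (e b) (e j))) = -3 * c" using pl(2) by simp
qed

lemma co_n: "co (X + vec v) b = (if b = i0 then 1 else 0) + v b"
  by (simp add: co_add co_X co_vec')

end

locale LSv = LS g DR e i0
  for g :: "real^'n \<Rightarrow> real^'n \<Rightarrow> real" and DR and e :: "'n \<Rightarrow> real^'n" and i0 :: 'n +
  fixes v :: "'n \<Rightarrow> real"
  assumes v0: "v i0 = 0"
begin

definition nn :: "real^'n" where "nn = X + vec v"
definition MM :: "'n \<Rightarrow> 'n \<Rightarrow> real" where "MM b j = DR (e b) nn nn (e j) nn"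
definition NN :: "'n \<Rightarrow> 'n \<Rightarrow> real" where "NN k l = (if k = i0 \<or> l = i0 then 0 else MM k l)"
definition ww :: "'n \<Rightarrow> real" where "ww l = (\<Sum>k\<in>UNIV. v k * NN k l)"
definition vw :: real where "vw = (\<Sum>k\<in>UNIV. v k * ww k)"

lemma MM_sym: "MM b j = MM j b" by (simp add: MM_def DR_symA)
lemma NN_sym: "NN k l = NN l k" by (auto simp: NN_def MM_sym)

lemma MM_rel: "MM i0 j = - (\<Sum>b\<in>UNIV. v b * MM b j)"
proof -
  have "0 = DR nn nn nn (e j) nn" by simp
  also have "\<dots> = DR (\<Sum>b\<in>UNIV. co nn b *\<^sub>R e b) nn nn (e j) nn" by (simp flip: expand)
  also have "\<dots> = (\<Sum>b\<in>UNIV. co nn b * MM b j)" by (simp add: DR_sum1 DR_sc1 MM_def)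
  also have "\<dots> = (\<Sum>b\<in>UNIV. (if b = i0 then MM b j else 0) + v b * MM b j)"
    by (rule sum.cong) (simp_all add: nn_def co_n distrib_right)
  also have "\<dots> = MM i0 j + (\<Sum>b\<in>UNIV. v b * MM b j)" by (simp add: sum.distrib)
  finally show ?thesis by simp
qed

lemma sumvM: "j \<noteq> i0 \<Longrightarrow> (\<Sum>b\<in>UNIV. v b * MM b j) = ww j"
  unfolding ww_def by (rule sum.cong) (auto simp: NN_def v0)

lemma MM_0j: "j \<noteq> i0 \<Longrightarrow> MM i0 j = - ww j" using MM_rel sumvM by simp
lemma ww0: "ww i0 = 0" by (simp add: ww_def NN_def)
lemma MM_00: "MM i0 i0 = vw"
proof -
  have "(\<Sum>b\<in>UNIV. v b * MM b i0) = (\<Sum>b\<in>UNIV. - (v b * ww b))"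
  proof (rule sum.cong[OF refl])
    fix b show "v b * MM b i0 = - (v b * ww b)"
      by (cases "b = i0") (simp_all add: v0 MM_sym[of b i0] MM_0j)
  qed
  then show ?thesis using MM_rel[of i0] by (simp add: vw_def sum_negf)
qed

lemma F_decomp: "F nn = (\<Sum>k\<in>UNIV. \<Sum>l\<in>UNIV. (NN k l)\<^sup>2) - 2 * (\<Sum>l\<in>UNIV. ww l * ww l) + vw\<^sup>2"
proof -
  have pt: "eps b * eps j * (MM b j)\<^sup>2 = (NN b j)\<^sup>2 + ((if b = i0 \<and> j = i0 then vw\<^sup>2 else 0)
       - (if b = i0 then ww j * ww j else 0) - (if j = i0 then ww b * ww b else 0))" for b j
  proof (cases "b = i0"; cases "j = i0")
    assume "b = i0" "j = i0" then show ?thesis by (simp add: MM_00 ww0 NN_def)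
  next
    assume "b = i0" "j \<noteq> i0" then show ?thesis by (simp add: MM_0j NN_def power2_eq_square)
  next
    assume "b \<noteq> i0" "j = i0" then show ?thesis by (simp add: MM_sym[of b i0] MM_0j NN_def power2_eq_square)
  next
    assume "b \<noteq> i0" "j \<noteq> i0" then show ?thesis by (simp add: NN_def)
  qed
  have "F nn = (\<Sum>b\<in>UNIV. \<Sum>j\<in>UNIV. eps b * eps j * (MM b j)\<^sup>2)" by (simp add: F_def MM_def)
  also have "\<dots> = (\<Sum>b\<in>UNIV. \<Sum>j\<in>UNIV. (NN b j)\<^sup>2) + (\<Sum>b\<in>UNIV. \<Sum>j\<in>UNIV. ((if b = i0 \<and> j = i0 then vw\<^sup>2 else 0)
       - (if b = i0 then ww j * ww j else 0) - (if j = i0 then ww b * ww b else 0)))"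
    by (simp only: pt sum.distrib)
  also have "(\<Sum>b\<in>UNIV. \<Sum>j\<in>UNIV. ((if b = i0 \<and> j = i0 then vw\<^sup>2 else 0)
       - (if b = i0 then ww j * ww j else 0) - (if j = i0 then ww b * ww b else 0)))
     = vw\<^sup>2 - (\<Sum>l\<in>UNIV. ww l * ww l) - (\<Sum>l\<in>UNIV. ww l * ww l)"
  proof -
    have e1: "(\<Sum>j\<in>UNIV. if b = i0 \<and> j = i0 then vw\<^sup>2 else 0) = (if b = i0 then vw\<^sup>2 else 0)" for b
      by (cases "b = i0") simp_all
    have e2: "(\<Sum>j\<in>UNIV. if b = i0 then ww j * ww j else 0) = (if b = i0 then (\<Sum>l\<in>UNIV. ww l * ww l) else 0)" for b
      by (cases "b = i0") simp_all
    have e3: "(\<Sum>j\<in>UNIV. if j = i0 then ww b * ww b else (0::real)) = ww b * ww b" for b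
      by simp
    show ?thesis by (simp only: sum_subtractf e1 e2 e3) simp
  qed
  finally show ?thesis by simp
qed

lemma F_Q: "(\<Sum>k\<in>UNIV. \<Sum>l\<in>UNIV. (NN k l - v k * ww l - ww k * v l + vw * v k * v l)\<^sup>2)
   = (\<Sum>k\<in>UNIV. \<Sum>l\<in>UNIV. (NN k l)\<^sup>2) - 2 * (2 - (\<Sum>k\<in>UNIV. v k * v k)) * (\<Sum>l\<in>UNIV. ww l * ww l)
     + (2 - (\<Sum>k\<in>UNIV. v k * v k))\<^sup>2 * vw\<^sup>2"
  unfolding vw_def ww_def by (rule Q_ident) (rule NN_sym)

lemma Qsq_nonneg: "(\<Sum>k\<in>UNIV. \<Sum>l\<in>UNIV. (NN k l - v k * ww l - ww k * v l + vw * v k * v l)\<^sup>2) \<ge> 0"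
  by (intro sum_nonneg) simp

lemma DR_vec: "DR (vec y) nn nn (vec y') nn = (\<Sum>k\<in>UNIV. \<Sum>l\<in>UNIV. y k * y' l * MM k l)"
  by (simp add: vec_def DR_sum1 DR_sum4 DR_sc1 DR_sc4 MM_def sum_distrib_left mult_ac) (rule sum.swap)

lemma null_case:
  assumes vv: "(\<Sum>k\<in>UNIV. v k * v k) = 1" and F0: "F nn = 0"
    and y: "y i0 = 0" "y' i0 = 0" "(\<Sum>k\<in>UNIV. y k * v k) = 0" "(\<Sum>k\<in>UNIV. y' k * v k) = 0"
  shows "DR (vec y) nn nn (vec y') nn = 0"
proof -
  have "(\<Sum>k\<in>UNIV. \<Sum>l\<in>UNIV. (NN k l - v k * ww l - ww k * v l + vw * v k * v l)\<^sup>2) = 0"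
    using F_Q F_decomp vv F0 by simp
  then have "\<forall>k\<in>UNIV. (\<Sum>l\<in>UNIV. (NN k l - v k * ww l - ww k * v l + vw * v k * v l)\<^sup>2) = 0"
    by (subst sum_nonneg_eq_0_iff[symmetric]) (auto intro: sum_nonneg)
  then have "\<forall>k\<in>UNIV. \<forall>l\<in>UNIV. (NN k l - v k * ww l - ww k * v l + vw * v k * v l)\<^sup>2 = 0"
    by (subst (asm) sum_nonneg_eq_0_iff) auto
  then have h0: "NN k l - v k * ww l - ww k * v l + vw * v k * v l = 0" for k l by simp
  have Nf: "NN k l = v k * ww l + ww k * v l - vw * v k * v l" for k l using h0[of k l] by linarith
  have "DR (vec y) nn nn (vec y') nn = (\<Sum>k\<in>UNIV. \<Sum>l\<in>UNIV. y k * y' l * NN k l)"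
    unfolding DR_vec by (intro sum.cong refl) (auto simp: NN_def y)
  also have "\<dots> = (\<Sum>k\<in>UNIV. \<Sum>l\<in>UNIV. (y k * v k) * (y' l * ww l) + (y k * ww k) * (y' l * v l)
       - vw * (y k * v k) * (y' l * v l))"
    by (intro sum.cong refl) (simp add: Nf algebra_simps)
  also have "\<dots> = (\<Sum>k\<in>UNIV. y k * v k) * (\<Sum>l\<in>UNIV. y' l * ww l) + (\<Sum>k\<in>UNIV. y k * ww k) * (\<Sum>l\<in>UNIV. y' l * v l)
       - vw * ((\<Sum>k\<in>UNIV. y k * v k) * (\<Sum>l\<in>UNIV. y' l * v l))"
  proof -
    have A: "(\<Sum>k\<in>UNIV. \<Sum>l\<in>UNIV. (y k * v k) * (y' l * ww l)) = (\<Sum>k\<in>UNIV. y k * v k) * (\<Sum>l\<in>UNIV. y' l * ww l)"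
      by (simp add: sum_product)
    have B: "(\<Sum>k\<in>UNIV. \<Sum>l\<in>UNIV. (y k * ww k) * (y' l * v l)) = (\<Sum>k\<in>UNIV. y k * ww k) * (\<Sum>l\<in>UNIV. y' l * v l)"
      by (simp add: sum_product)
    have C0: "(\<Sum>k\<in>UNIV. y k * v k) * (\<Sum>l\<in>UNIV. y' l * v l) = (\<Sum>k\<in>UNIV. \<Sum>l\<in>UNIV. (y k * v k) * (y' l * v l))"
      by (rule sum_product)
    have C: "(\<Sum>k\<in>UNIV. \<Sum>l\<in>UNIV. vw * (y k * v k) * (y' l * v l)) = vw * ((\<Sum>k\<in>UNIV. y k * v k) * (\<Sum>l\<in>UNIV. y' l * v l))"
      unfolding C0 by (simp add: sum_distrib_left mult.assoc)
    show ?thesis by (simp only: sum.distrib sum_subtractf A B C)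
  qed
  also have "\<dots> = 0" using y by simp
  finally show ?thesis .
qed

lemma pos_case:
  assumes vv: "(\<Sum>k\<in>UNIV. v k * v k) < 1" and F0: "F nn = 0"
  shows "MM b j = 0"
proof -
  define s where "s = 1 - (\<Sum>k\<in>UNIV. v k * v k)"
  have s: "s > 0" using vv by (simp add: s_def)
  define W where "W = (\<Sum>l\<in>UNIV. ww l * ww l)"
  define Ns where "Ns = (\<Sum>k\<in>UNIV. \<Sum>l\<in>UNIV. (NN k l)\<^sup>2)"
  define Qs where "Qs = (\<Sum>k\<in>UNIV. \<Sum>l\<in>UNIV. (NN k l - v k * ww l - ww k * v l + vw * v k * v l)\<^sup>2)"
  have W0: "W \<ge> 0" unfolding W_def by (intro sum_nonneg) simp
  have Qs0: "Qs \<ge> 0" unfolding Qs_def by (rule Qsq_nonneg)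
  have e1: "Qs = Ns - 2 * (1 + s) * W + (1 + s)\<^sup>2 * vw\<^sup>2"
    using F_Q unfolding Qs_def Ns_def W_def s_def by simp
  have e2: "Ns = 2 * W - vw\<^sup>2" using F_decomp F0 unfolding Ns_def W_def by simp
  have e3: "Qs = - 2 * s * W + s * (2 + s) * vw\<^sup>2"
    using e1 e2 by (simp add: power2_eq_square algebra_simps)
  have cs: "vw\<^sup>2 \<le> (1 - s) * W"
  proof -
    have "vw\<^sup>2 \<le> (\<Sum>k\<in>UNIV. (v k)\<^sup>2) * (\<Sum>k\<in>UNIV. (ww k)\<^sup>2)"
      unfolding vw_def by (rule Cauchy_Schwarz_ineq_sum)
    then show ?thesis by (simp add: s_def W_def power2_eq_square)
  qed
  have "s * (2 + s) * vw\<^sup>2 \<le> s * (2 + s) * ((1 - s) * W)"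
    using cs s by (intro mult_left_mono) simp_all
  then have "0 \<le> - 2 * s * W + s * (2 + s) * ((1 - s) * W)" using Qs0 e3 by linarith
  also have "- 2 * s * W + s * (2 + s) * ((1 - s) * W) = - ((s * s * (1 + s)) * W)"
    by (simp add: algebra_simps)
  finally have "(s * s * (1 + s)) * W \<le> 0" by simp
  moreover have "s * s * (1 + s) > 0" using s by simp
  ultimately have "W \<le> 0" using mult_left_le_imp_le[of "s * s * (1 + s)" W 0] by simp
  then have "W = 0" using W0 by simp
  then have "\<forall>l\<in>UNIV. ww l * ww l = 0" unfolding W_def
    by (subst sum_nonneg_eq_0_iff[symmetric]) auto
  then have ww_0: "ww l = 0" for l by simp
  then have vw0: "vw = 0" by (simp add: vw_def)
  have "Ns = 0" using e2 \<open>W = 0\<close> vw0 by simp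
  then have "\<forall>k\<in>UNIV. (\<Sum>l\<in>UNIV. (NN k l)\<^sup>2) = 0" unfolding Ns_def
    by (subst sum_nonneg_eq_0_iff[symmetric]) (auto intro: sum_nonneg)
  then have "\<forall>k\<in>UNIV. \<forall>l\<in>UNIV. (NN k l)\<^sup>2 = 0"
    by (subst (asm) sum_nonneg_eq_0_iff) auto
  then have NN0: "NN k l = 0" for k l by simp
  show "MM b j = 0"
  proof (cases "b = i0"; cases "j = i0")
    assume "b = i0" "j = i0" then show ?thesis using MM_00 vw0 by simp
  next
    assume "b = i0" "j \<noteq> i0" then show ?thesis using MM_0j ww_0 by simp
  next
    assume "b \<noteq> i0" "j = i0" then show ?thesis using MM_0j ww_0 MM_sym[of b i0] by simp
  next
    assume "b \<noteq> i0" "j \<noteq> i0" then show ?thesis using NN0[of b j] by (simp add: NN_def)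
  qed
qed

end

context LS begin

lemma DR_v1: "DR a b c d x = DR a b c d x" by simp
lemma DR_v2: "DR a b c d x = - DR b a c d x" by (rule DR_as12)
lemma DR_v3: "DR a b c d x = - DR a b d c x" by (rule DR_as34)
lemma DR_v4: "DR a b c d x = DR b a d c x" using DR_as12[of a b c d x] DR_as34[of b a c d x] by simp
lemma DR_v5: "DR a b c d x = DR c d a b x" by (rule DR_pair)
lemma DR_v6: "DR a b c d x = - DR d c a b x" using DR_pair[of a b c d x] DR_as12[of c d a b x] by simp
lemma DR_v7: "DR a b c d x = - DR c d b a x" using DR_pair[of a b c d x] DR_as34[of c d a b x] by simp
lemma DR_v8: "DR a b c d x = DR d c b a x" using DR_v6[of a b c d x] DR_as34[of d c a b x] by simp

lemma plane_alg:
  "((1/2) * P0 (a + b) (a + b) + (1/4) * P2 (a - b) (a + b) (a + b))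
   - ((1/2) * P0 (a - b) (a - b) + (1/4) * P2 (a + b) (a - b) (a - b))
   = 2 * (P0 a b + P2 a a b + P2 b a b)"
proof -
  note inst = DR_v3[of X a a X X] DR_v3[of X a a X a] DR_v3[of X a a X b] DR_v3[of X a b X X] DR_v3[of X a b X a] DR_v3[of X a b X b] DR_v3[of X a b a X] DR_v3[of X a b a a] DR_v3[of X a b a b] DR_v5[of X b X a X] DR_v5[of X b X a a] DR_v5[of X b X a b] DR_v6[of X b a X X] DR_v6[of X b a X a] DR_v6[of X b a X b] DR_v3[of X b b X X] DR_v3[of X b b X a] DR_v3[of X b b X b] DR_v3[of X b b a X] DR_v3[of X b b a a] DR_v3[of X b b a b] DR_v2[of a X X a X] DR_v2[of a X X a a] DR_v2[of a X X a b] DR_v2[of a X X b X] DR_v2[of a X X b a] DR_v2[of a X X b b] DR_v4[of a X a X X] DR_v4[of a X a X a] DR_v4[of a X a X b] DR_v2[of a X a b X] DR_v2[of a X a b a] DR_v2[of a X a b b] DR_v4[of a X b X X] DR_v4[of a X b X a] DR_v4[of a X b X b] DR_v4[of a X b a X] DR_v4[of a X b a a] DR_v4[of a X b a b] DR_v5[of a b X a X] DR_v5[of a b X a a] DR_v5[of a b X a b] DR_v5[of a b X b X] DR_v5[of a b X b a] DR_v5[of a b X b b] DR_v6[of a b a X X] DR_v6[of a b a X a] DR_v6[of a b a X b] DR_v6[of a b b X X] DR_v6[of a b b X a] DR_v6[of a b b X b] DR_v3[of a b b a X] DR_v3[of a b b a a] DR_v3[of a b b a b] DR_v7[of b X X a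 X] DR_v7[of b X X a a] DR_v7[of b X X a b] DR_v2[of b X X b X] DR_v2[of b X X b a] DR_v2[of b X X b b] DR_v8[of b X a X X] DR_v8[of b X a X a] DR_v8[of b X a X b] DR_v2[of b X a b X] DR_v2[of b X a b a] DR_v2[of b X a b b] DR_v4[of b X b X X] DR_v4[of b X b X a] DR_v4[of b X b X b] DR_v4[of b X b a X] DR_v4[of b X b a a] DR_v4[of b X b a b] DR_v7[of b a X a X] DR_v7[of b a X a a] DR_v7[of b a X a b] DR_v7[of b a X b X] DR_v7[of b a X b a] DR_v7[of b a X b b] DR_v8[of b a a X X] DR_v8[of b a a X a] DR_v8[of b a a X b] DR_v2[of b a a b X] DR_v2[of b a a b a] DR_v2[of b a a b b] DR_v8[of b a b X X] DR_v8[of b a b X a] DR_v8[of b a b X b] DR_v4[of b a b a X] DR_v4[of b a b a a] DR_v4[of b a b a b]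
  show ?thesis
    unfolding P0_def P2_def
    apply (simp add: DR_add1 DR_add2 DR_add3 DR_add4 DR_add5 DR_diff1 DR_diff2 DR_diff3 DR_diff4 DR_diff5)
    apply (simp only: inst)
    apply (simp add: field_simps)
    done
qed

lemma vec_neg: "vec (\<lambda>l. - v l) = - vec v"
  by (simp add: vec_def sum_negf)

lemma vec_ind: "vec (\<lambda>l. if l = k then r else 0) = r *\<^sub>R e k"
proof -
  have "vec (\<lambda>l. if l = k then r else 0) = (\<Sum>l\<in>UNIV. if l = k then r *\<^sub>R e l else 0)"
    unfolding vec_def by (rule sum.cong) simp_all
  also have "\<dots> = r *\<^sub>R e k" by simp
  finally show ?thesis .
qed

lemma vec_two: assumes "i \<noteq> j"
  shows "vec (\<lambda>l. if l = i then p else if l = j then q else 0) = p *\<^sub>R e i + q *\<^sub>R e j"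
proof -
  have "vec (\<lambda>l. if l = i then p else if l = j then q else 0)
      = (\<Sum>l\<in>UNIV. (if l = i then p *\<^sub>R e l else 0) + (if l = j then q *\<^sub>R e l else 0))"
    unfolding vec_def by (rule sum.cong) (use assms in auto)
  also have "\<dots> = p *\<^sub>R e i + q *\<^sub>R e j" by (simp add: sum.distrib)
  finally show ?thesis .
qed

lemma gvv: assumes "v i0 = 0" shows "g (vec v) (vec v) = (\<Sum>k\<in>UNIV. v k * v k)"
  unfolding g_vec by (rule sum.cong) (auto simp: assms eps_def)

lemma E1_gen:
  assumes hyp: "\<forall>x. g x x = -1 \<longrightarrow> F x = c"
    and v0: "v i0 = 0" and vv: "(\<Sum>k\<in>UNIV. v k * v k) = 1"
    and y: "y i0 = 0" "y' i0 = 0" "(\<Sum>k\<in>UNIV. y k * v k) = 0" "(\<Sum>k\<in>UNIV. y' k * v k) = 0"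
  shows "P0 (vec y) (vec y') + P2 (vec v) (vec y) (vec y') = 0"
proof -
  define u where "u = vec v"
  have uX: "g u X = 0" using v0 by (simp add: u_def g_vecX)
  have uu: "g u u = 1" using gvv[of v, OF v0] vv by (simp add: u_def)
  note L = line(1)[OF hyp uX uu]
  interpret A: LSv g DR e i0 v by unfold_locales (rule v0)
  have "A.nn = X + 1 *\<^sub>R u" by (simp add: A.nn_def u_def)
  then have FA: "F A.nn = 0" using L[of 1] by simp
  have "DR (vec y) A.nn A.nn (vec y') A.nn = 0" by (rule A.null_case[OF vv FA y])
  then have s1: "P0 (vec y) (vec y') + P1 u (vec y) (vec y') + P2 u (vec y) (vec y') + P3 u (vec y) (vec y') = 0"
    using DR_line[of "vec y" 1 u "vec y'"] \<open>A.nn = X + 1 *\<^sub>R u\<close> by simp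
  interpret B: LSv g DR e i0 "\<lambda>l. - v l" by unfold_locales (simp add: v0)
  have "B.nn = X + (-1) *\<^sub>R u" by (simp add: B.nn_def u_def vec_neg)
  then have FB: "F B.nn = 0" using L[of "-1"] by simp
  have vvB: "(\<Sum>k\<in>UNIV. - v k * - v k) = 1" using vv by simp
  have yB: "(\<Sum>k\<in>UNIV. y k * - v k) = 0" "(\<Sum>k\<in>UNIV. y' k * - v k) = 0"
    using y(3,4) by (simp_all add: sum_negf)
  have "DR (vec y) B.nn B.nn (vec y') B.nn = 0" by (rule B.null_case[OF vvB FB y(1,2) yB])
  then have s2: "P0 (vec y) (vec y') - P1 u (vec y) (vec y') + P2 u (vec y) (vec y') - P3 u (vec y) (vec y') = 0"
    using DR_line[of "vec y" "-1" u "vec y'"] \<open>B.nn = X + (-1) *\<^sub>R u\<close> by simp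
  from s1 s2 show ?thesis by (simp add: u_def)
qed

lemma sum_ind2: fixes i j :: 'n shows "(\<Sum>l\<in>UNIV. (if l = i then p else 0) * (if l = j then q else (0::real))) = (if i = j then p * q else 0)"
proof -
  have "(\<Sum>l\<in>UNIV. (if l = i then p else 0) * (if l = j then q else (0::real)))
      = (\<Sum>l\<in>UNIV. if l = i then (if i = j then p * q else 0) else 0)"
    by (rule sum.cong) auto
  then show ?thesis by simp
qed

lemma sum_two2:
  fixes i j :: 'n
  assumes "i \<noteq> j"
  shows "(\<Sum>l\<in>UNIV. (if l = i then p else if l = j then q else 0) * (if l = i then p' else if l = j then q' else (0::real)))
     = p * p' + q * q'"
proof -
  have "(\<Sum>l\<in>UNIV. (if l = i then p else if l = j then q else 0) * (if l = i then p' else if l = j then q' else (0::real)))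
      = (\<Sum>l\<in>UNIV. (if l = i then p * p' else 0) + (if l = j then q * q' else 0))"
    by (rule sum.cong) (use assms in auto)
  also have "\<dots> = p * p' + q * q'" by (simp add: sum.distrib)
  finally show ?thesis .
qed

lemma E1a:
  assumes hyp: "\<forall>x. g x x = -1 \<longrightarrow> F x = c"
    and k: "k \<noteq> i0" and i: "i \<noteq> i0" "i \<noteq> k" and j: "j \<noteq> i0" "j \<noteq> k"
  shows "P0 (e i) (e j) + P2 (e k) (e i) (e j) = 0"
proof -
  have "P0 (vec (\<lambda>l. if l = i then 1 else 0)) (vec (\<lambda>l. if l = j then 1 else 0))
      + P2 (vec (\<lambda>l. if l = k then 1 else 0)) (vec (\<lambda>l. if l = i then 1 else 0)) (vec (\<lambda>l. if l = j then 1 else 0)) = 0"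
    by (rule E1_gen[OF hyp]) (use k i j in \<open>simp_all add: sum_ind2\<close>)
  then show ?thesis by (simp add: vec_ind)
qed

lemma P0_scale: "P0 (t *\<^sub>R y) (t *\<^sub>R w) = t * t * P0 y w"
  by (simp add: P0_def DR_sc1 DR_sc4)
lemma P2_scale: "P2 (t *\<^sub>R u) (t *\<^sub>R y) (t *\<^sub>R w) = t * t * (t * t) * P2 u y w"
  by (simp add: P2_def DR_sc1 DR_sc2 DR_sc3 DR_sc4 DR_sc5 algebra_simps)

lemma plane_half:
  assumes hyp: "\<forall>x. g x x = -1 \<longrightarrow> F x = c"
    and ij: "i \<noteq> j" "i \<noteq> i0" "j \<noteq> i0" and sg: "\<sigma> * \<sigma> = (1::real)"
  shows "(1/2) * P0 (e i - \<sigma> *\<^sub>R e j) (e i - \<sigma> *\<^sub>R e j)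
       + (1/4) * P2 (e i + \<sigma> *\<^sub>R e j) (e i - \<sigma> *\<^sub>R e j) (e i - \<sigma> *\<^sub>R e j) = 0"
proof -
  define t :: real where "t = 1 / sqrt 2"
  have tt: "t * t = 1/2" by (simp add: t_def)
  define v where "v = (\<lambda>l. if l = i then t else if l = j then \<sigma> * t else 0)"
  define y where "y = (\<lambda>l. if l = i then t else if l = j then - \<sigma> * t else 0)"
  have vv: "vec v = t *\<^sub>R (e i + \<sigma> *\<^sub>R e j)" using vec_two[OF ij(1), of t "\<sigma> * t"]
    by (simp add: v_def scaleR_add_right)
  have yy: "vec y = t *\<^sub>R (e i - \<sigma> *\<^sub>R e j)" using vec_two[OF ij(1), of t "- \<sigma> * t"]
    by (simp add: y_def scaleR_diff_right)
  have "P0 (vec y) (vec y) + P2 (vec v) (vec y) (vec y) = 0"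
  proof (rule E1_gen[OF hyp])
    show "v i0 = 0" using ij by (simp add: v_def)
    show "y i0 = 0" using ij by (simp add: y_def)
    then show "y i0 = 0" .
    have m: "\<sigma> * t * (\<sigma> * t) = (\<sigma> * \<sigma>) * (t * t)" by (simp add: mult_ac)
    have m2: "- \<sigma> * t * (\<sigma> * t) = - ((\<sigma> * \<sigma>) * (t * t))" by (simp add: mult_ac)
    show "(\<Sum>k\<in>UNIV. v k * v k) = 1" unfolding v_def sum_two2[OF ij(1)] m sg tt by simp
    show "(\<Sum>k\<in>UNIV. y k * v k) = 0" unfolding v_def y_def sum_two2[OF ij(1)] m2 sg tt by simp
    then show "(\<Sum>k\<in>UNIV. y k * v k) = 0" .
  qed
  then have "t * t * P0 (e i - \<sigma> *\<^sub>R e j) (e i - \<sigma> *\<^sub>R e j)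
      + t * t * (t * t) * P2 (e i + \<sigma> *\<^sub>R e j) (e i - \<sigma> *\<^sub>R e j) (e i - \<sigma> *\<^sub>R e j) = 0"
    by (simp add: vv yy P0_scale P2_scale)
  then show ?thesis by (simp add: tt)
qed

lemma plane:
  assumes hyp: "\<forall>x. g x x = -1 \<longrightarrow> F x = c"
    and ij: "i \<noteq> j" "i \<noteq> i0" "j \<noteq> i0"
  shows "P0 (e i) (e j) + P2 (e i) (e i) (e j) + P2 (e j) (e i) (e j) = 0"
proof -
  have h1: "(1/2) * P0 (e i - e j) (e i - e j) + (1/4) * P2 (e i + e j) (e i - e j) (e i - e j) = 0"
    using plane_half[OF hyp ij, of 1] by simp
  have h2: "(1/2) * P0 (e i + e j) (e i + e j) + (1/4) * P2 (e i - e j) (e i + e j) (e i + e j) = 0"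
    using plane_half[OF hyp ij, of "-1"] by simp
  show ?thesis using plane_alg[of "e i" "e j"] h1 h2 by simp
qed

definition JJ :: "'n set" where "JJ = UNIV - {i0}"

lemma JJ_fin[simp]: "finite JJ" by (simp add: JJ_def)
lemma in_JJ[simp]: "k \<in> JJ \<longleftrightarrow> k \<noteq> i0" by (simp add: JJ_def)

lemma sumU: "(\<Sum>b\<in>UNIV. h b) = h i0 + (\<Sum>b\<in>JJ. h b)"
  unfolding JJ_def by (rule sum.remove) simp_all

lemma sum_JJ1: "(\<Sum>j\<in>JJ. eps j * h j) = (\<Sum>j\<in>JJ. h j)"
  by (rule sum.cong) simp_all

lemma sum_eps1: "(\<Sum>j\<in>UNIV. eps j * h j) = - h i0 + (\<Sum>j\<in>JJ. h j)"
proof -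
  have "(\<Sum>j\<in>UNIV. eps j * h j) = eps i0 * h i0 + (\<Sum>j\<in>JJ. eps j * h j)" by (rule sumU)
  then show ?thesis by (simp add: sum_JJ1)
qed

lemma sum_eps2: "(\<Sum>b\<in>UNIV. \<Sum>j\<in>UNIV. eps b * eps j * f b j)
   = f i0 i0 - (\<Sum>j\<in>JJ. f i0 j) - (\<Sum>b\<in>JJ. f b i0) + (\<Sum>b\<in>JJ. \<Sum>j\<in>JJ. f b j)"
proof -
  have "(\<Sum>b\<in>UNIV. \<Sum>j\<in>UNIV. eps b * eps j * f b j) = (\<Sum>b\<in>UNIV. eps b * (\<Sum>j\<in>UNIV. eps j * f b j))"
    by (simp add: sum_distrib_left mult.assoc)
  also have "\<dots> = (\<Sum>b\<in>UNIV. eps b * (- f b i0 + (\<Sum>j\<in>JJ. f b j)))"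
    by (simp add: sum_eps1)
  also have "\<dots> = - (- f i0 i0 + (\<Sum>j\<in>JJ. f i0 j)) + (\<Sum>b\<in>JJ. - f b i0 + (\<Sum>j\<in>JJ. f b j))"
    by (rule sum_eps1)
  also have "\<dots> = f i0 i0 - (\<Sum>j\<in>JJ. f i0 j) - (\<Sum>b\<in>JJ. f b i0) + (\<Sum>b\<in>JJ. \<Sum>j\<in>JJ. f b j)"
    by (simp add: sum.distrib sum_negf sum_subtractf)
  finally show ?thesis .
qed

lemma card_rm:
  assumes "finite A" "x \<in> A" shows "real (card (A - {x})) = real (card A) - 1"
proof -
  have "0 < card A" using assms by (auto simp: card_gt_0_iff)
  moreover have "card (A - {x}) = card A - 1" using assms by (simp add: card_Diff_singleton)
  ultimately show ?thesis by (simp add: of_nat_diff)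
qed

lemma P0_i0a: "P0 (e i0) w = 0" by (simp add: P0_def X_def)
lemma P0_i0b: "P0 y (e i0) = 0" by (simp add: P0_def X_def)
lemma P0_sym: "P0 y w = P0 w y" by (simp add: P0_def DR_symA)
lemma P1_i0a: "P1 u (e i0) w = - P0 u w"
  by (simp add: P1_def P0_def X_def DR_as12[of "e i0" u])
lemma P1_i0b: "P1 u y (e i0) = - P0 y u"
  by (simp add: P1_def P0_def X_def DR_as34[of y "e i0" u])
lemma P2_diag: "P2 y y y = 0" by (simp add: P2_def)

lemma KS:
  assumes hyp: "\<forall>x. g x x = -1 \<longrightarrow> F x = c" and b: "b \<noteq> i0" and j: "j \<noteq> i0"
  shows "(\<Sum>k\<in>JJ. P2 (e k) (e b) (e j)) = - (real (card JJ) - 1) * P0 (e b) (e j)"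
proof (cases "b = j")
  case True
  have "(\<Sum>k\<in>JJ. P2 (e k) (e b) (e j)) = P2 (e b) (e b) (e j) + (\<Sum>k\<in>JJ - {b}. P2 (e k) (e b) (e j))"
    by (rule sum.remove) (simp_all add: b)
  also have "(\<Sum>k\<in>JJ - {b}. P2 (e k) (e b) (e j)) = (\<Sum>k\<in>JJ - {b}. - P0 (e b) (e j))"
  proof (rule sum.cong[OF refl])
    fix k assume k: "k \<in> JJ - {b}"
    show "P2 (e k) (e b) (e j) = - P0 (e b) (e j)"
      using E1a[OF hyp, of k b j] k b j True by auto
  qed
  also have "\<dots> = - (real (card JJ) - 1) * P0 (e b) (e j)"
  proof -
    have cr: "real (card (JJ - {b})) = real (card JJ) - 1" by (rule card_rm) (simp_all add: b)
    show ?thesis by (simp only: sum_negf sum_constant cr)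
  qed
  finally show ?thesis using True by (simp add: P2_diag)
next
  case False
  have "(\<Sum>k\<in>JJ. P2 (e k) (e b) (e j)) = P2 (e b) (e b) (e j) + (\<Sum>k\<in>JJ - {b}. P2 (e k) (e b) (e j))"
    by (rule sum.remove) (simp_all add: b)
  also have "(\<Sum>k\<in>JJ - {b}. P2 (e k) (e b) (e j)) = P2 (e j) (e b) (e j) + (\<Sum>k\<in>JJ - {b} - {j}. P2 (e k) (e b) (e j))"
    by (rule sum.remove) (use False j in auto)
  also have "(\<Sum>k\<in>JJ - {b} - {j}. P2 (e k) (e b) (e j)) = (\<Sum>k\<in>JJ - {b} - {j}. - P0 (e b) (e j))"
  proof (rule sum.cong[OF refl])
    fix k assume k: "k \<in> JJ - {b} - {j}"
    show "P2 (e k) (e b) (e j) = - P0 (e b) (e j)"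
      using E1a[OF hyp, of k b j] k b j by auto
  qed
  also have "\<dots> = - (real (card JJ) - 2) * P0 (e b) (e j)"
  proof -
    have cr1: "real (card (JJ - {b} - {j})) = real (card (JJ - {b})) - 1"
      by (rule card_rm) (use False j in auto)
    have cr2: "real (card (JJ - {b})) = real (card JJ) - 1" by (rule card_rm) (simp_all add: b)
    show ?thesis by (simp only: sum_negf sum_constant cr1 cr2) (simp add: algebra_simps)
  qed
  finally show ?thesis using plane[OF hyp False b j] by (simp add: algebra_simps)
qed

lemma swap3: "(\<Sum>k\<in>A. \<Sum>b\<in>B. \<Sum>j\<in>C. h k b j) = (\<Sum>b\<in>B. \<Sum>j\<in>C. \<Sum>k\<in>A. (h k b j :: real))"
proof -
  have "(\<Sum>k\<in>A. \<Sum>b\<in>B. \<Sum>j\<in>C. h k b j) = (\<Sum>b\<in>B. \<Sum>k\<in>A. \<Sum>j\<in>C. h k b j)" by (rule sum.swap)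
  also have "\<dots> = (\<Sum>b\<in>B. \<Sum>j\<in>C. \<Sum>k\<in>A. h k b j)" by (rule sum.cong[OF refl]) (rule sum.swap)
  finally show ?thesis .
qed

lemma c_zero:
  assumes hyp: "\<forall>x. g x x = -1 \<longrightarrow> F x = c" and cJ: "card JJ \<ge> 1"
  shows "c = 0"
proof -
  have "F X = c" using hyp gXX by simp
  moreover have "F X = (\<Sum>b\<in>UNIV. \<Sum>j\<in>UNIV. eps b * eps j * (P0 (e b) (e j))\<^sup>2)"
    by (simp add: F_def P0_def)
  moreover have "\<dots> = (\<Sum>b\<in>JJ. \<Sum>j\<in>JJ. (P0 (e b) (e j))\<^sup>2)"
    by (simp add: sum_eps2 P0_i0a P0_i0b)
  ultimately have cF: "c = (\<Sum>b\<in>JJ. \<Sum>j\<in>JJ. (P0 (e b) (e j))\<^sup>2)" by simp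
  have c0: "c \<ge> 0" unfolding cF by (intro sum_nonneg) simp
  have L2: "(\<Sum>b\<in>JJ. \<Sum>j\<in>JJ. P1 (e k) (e b) (e j) * P1 (e k) (e b) (e j) + 2 * P0 (e b) (e j) * P2 (e k) (e b) (e j))
      - (\<Sum>j\<in>JJ. (P0 (e k) (e j))\<^sup>2) - (\<Sum>b\<in>JJ. (P0 (e b) (e k))\<^sup>2) = -3 * c" if k: "k \<in> JJ" for k
  proof -
    have uX: "g (e k) X = 0" using k by (simp add: X_def g_ee)
    have uu: "g (e k) (e k) = 1" using k by (simp add: g_ee)
    have "-3 * c = (\<Sum>b\<in>UNIV. \<Sum>j\<in>UNIV. eps b * eps j * (P1 (e k) (e b) (e j) * P1 (e k) (e b) (e j)
            + 2 * P0 (e b) (e j) * P2 (e k) (e b) (e j)))"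
      using line(2)[OF hyp uX uu] by simp
    also have "\<dots> = (\<Sum>b\<in>JJ. \<Sum>j\<in>JJ. P1 (e k) (e b) (e j) * P1 (e k) (e b) (e j) + 2 * P0 (e b) (e j) * P2 (e k) (e b) (e j))
      - (\<Sum>j\<in>JJ. (P0 (e k) (e j))\<^sup>2) - (\<Sum>b\<in>JJ. (P0 (e b) (e k))\<^sup>2)"
      by (simp add: sum_eps2 P1_i0a P1_i0b P0_i0a P0_i0b power2_eq_square)
    finally show ?thesis by simp
  qed
  define T where "T = (\<Sum>k\<in>JJ. \<Sum>b\<in>JJ. \<Sum>j\<in>JJ. P1 (e k) (e b) (e j) * P1 (e k) (e b) (e j))"
  have T0: "T \<ge> 0" unfolding T_def by (intro sum_nonneg) simp
  have sA: "(\<Sum>k\<in>JJ. \<Sum>b\<in>JJ. \<Sum>j\<in>JJ. P0 (e b) (e j) * P2 (e k) (e b) (e j)) = - (real (card JJ) - 1) * c"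
  proof -
    have "(\<Sum>k\<in>JJ. \<Sum>b\<in>JJ. \<Sum>j\<in>JJ. P0 (e b) (e j) * P2 (e k) (e b) (e j))
        = (\<Sum>b\<in>JJ. \<Sum>j\<in>JJ. \<Sum>k\<in>JJ. P0 (e b) (e j) * P2 (e k) (e b) (e j))" by (rule swap3)
    also have "\<dots> = (\<Sum>b\<in>JJ. \<Sum>j\<in>JJ. P0 (e b) (e j) * (- (real (card JJ) - 1) * P0 (e b) (e j)))"
      by (intro sum.cong refl) (simp add: sum_distrib_left[symmetric] KS[OF hyp])
    also have "\<dots> = - (real (card JJ) - 1) * c"
      by (simp add: cF sum_distrib_left power2_eq_square mult_ac)
    finally show ?thesis .
  qed
  have sB: "(\<Sum>k\<in>JJ. \<Sum>j\<in>JJ. (P0 (e k) (e j))\<^sup>2) = c" by (simp add: cF)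
  have sC: "(\<Sum>k\<in>JJ. \<Sum>b\<in>JJ. (P0 (e b) (e k))\<^sup>2) = c" by (simp add: cF) (rule sum.swap)
  have hA: "(\<Sum>k\<in>JJ. \<Sum>b\<in>JJ. \<Sum>j\<in>JJ. P1 (e k) (e b) (e j) * P1 (e k) (e b) (e j) + 2 * P0 (e b) (e j) * P2 (e k) (e b) (e j))
      = T + 2 * (\<Sum>k\<in>JJ. \<Sum>b\<in>JJ. \<Sum>j\<in>JJ. P0 (e b) (e j) * P2 (e k) (e b) (e j))"
    by (simp add: T_def sum.distrib sum_distrib_left mult.assoc)
  have "(\<Sum>k\<in>JJ. (\<Sum>b\<in>JJ. \<Sum>j\<in>JJ. P1 (e k) (e b) (e j) * P1 (e k) (e b) (e j) + 2 * P0 (e b) (e j) * P2 (e k) (e b) (e j))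
      - (\<Sum>j\<in>JJ. (P0 (e k) (e j))\<^sup>2) - (\<Sum>b\<in>JJ. (P0 (e b) (e k))\<^sup>2)) = (\<Sum>k\<in>JJ. -3 * c)"
    by (rule sum.cong[OF refl]) (rule L2)
  then have "(\<Sum>k\<in>JJ. \<Sum>b\<in>JJ. \<Sum>j\<in>JJ. P1 (e k) (e b) (e j) * P1 (e k) (e b) (e j) + 2 * P0 (e b) (e j) * P2 (e k) (e b) (e j))
      - (\<Sum>k\<in>JJ. \<Sum>j\<in>JJ. (P0 (e k) (e j))\<^sup>2) - (\<Sum>k\<in>JJ. \<Sum>b\<in>JJ. (P0 (e b) (e k))\<^sup>2) = (\<Sum>k\<in>JJ. -3 * c)"
    by (simp only: sum_subtractf)
  then have eq: "T + 2 * (- (real (card JJ) - 1) * c) - c - c = - 3 * c * real (card JJ)"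
    by (simp only: hA sA sB sC sum_constant) (simp add: mult_ac)
  then have "T + real (card JJ) * c = 0" by (simp add: algebra_simps)
  moreover have "real (card JJ) * c \<ge> 0" using c0 by simp
  ultimately have "real (card JJ) * c = 0" using T0 by linarith
  then show "c = 0" using cJ by (cases "JJ = {}") auto
qed

lemma co_eq: assumes "\<And>i. co a i = co b i" shows "a = b"
  by (subst expand[of a], subst expand[of b]) (simp add: assms)

lemma g_sq: "g x x = - (co x i0)\<^sup>2 + (\<Sum>k\<in>JJ. (co x k)\<^sup>2)"
proof -
  have "g x x = (\<Sum>i\<in>UNIV. eps i * (co x i * co x i))" by (simp add: g_coord mult.assoc)
  also have "\<dots> = - (co x i0 * co x i0) + (\<Sum>k\<in>JJ. co x k * co x k)" by (rule sum_eps1)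
  finally show ?thesis by (simp add: power2_eq_square)
qed

lemma timelike_zero:
  assumes hyp: "\<forall>x. g x x = -1 \<longrightarrow> F x = 0" and gx: "g x x < 0"
  shows "DR y x x w x = 0"
proof -
  have Fx: "F x = 0" using F_time[OF hyp, of x "- g x x"] gx by simp
  define x0 where "x0 = co x i0"
  have lt: "(\<Sum>k\<in>JJ. (co x k)\<^sup>2) < x0\<^sup>2" using gx g_sq[of x] by (simp add: x0_def)
  then have x0: "x0 \<noteq> 0" using sum_nonneg[of JJ "\<lambda>k. (co x k)\<^sup>2"] by auto
  define v where "v = (\<lambda>k. if k = i0 then 0 else co x k / x0)"
  have v0: "v i0 = 0" by (simp add: v_def)
  interpret A: LSv g DR e i0 v by unfold_locales (rule v0)
  have xe: "x = x0 *\<^sub>R A.nn"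
  proof (rule co_eq)
    fix i show "co x i = co (x0 *\<^sub>R A.nn) i"
      using x0 unfolding A.nn_def by (simp add: co_scale co_n v_def x0_def)
  qed
  have vv: "(\<Sum>k\<in>UNIV. v k * v k) < 1"
  proof -
    have "(\<Sum>k\<in>UNIV. v k * v k) = v i0 * v i0 + (\<Sum>k\<in>JJ. v k * v k)" by (rule sumU)
    also have "\<dots> = (\<Sum>k\<in>JJ. (co x k)\<^sup>2) / x0\<^sup>2"
      by (simp add: v0 v_def sum_divide_distrib power2_eq_square)
    also have "\<dots> < 1" using lt x0 by simp
    finally show ?thesis .
  qed
  have "F x = x0^6 * F A.nn" by (subst xe) (rule F_scale)
  then have FA: "F A.nn = 0" using Fx x0 by simp
  have MM0: "A.MM b j = 0" for b j by (rule A.pos_case[OF vv FA])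
  have "DR y A.nn A.nn w A.nn = 0"
  proof -
    have "DR y A.nn A.nn w A.nn = DR (\<Sum>b\<in>UNIV. co y b *\<^sub>R e b) A.nn A.nn (\<Sum>j\<in>UNIV. co w j *\<^sub>R e j) A.nn"
      by (simp flip: expand)
    also have "\<dots> = (\<Sum>b\<in>UNIV. \<Sum>j\<in>UNIV. co y b * co w j * A.MM b j)"
      by (simp add: DR_sum1 DR_sum4 DR_sc1 DR_sc4 A.MM_def sum_distrib_left mult_ac) (rule sum.swap)
    also have "\<dots> = 0" by (simp add: MM0)
    finally show ?thesis .
  qed
  moreover have "DR y x x w x = x0 * (x0 * (x0 * DR y A.nn A.nn w A.nn))"
    using xe by (simp add: DR_sc2 DR_sc3 DR_sc5)
  ultimately show ?thesis by simp
qed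

lemma DR_line2: "DR y (p + t *\<^sub>R q) (p + t *\<^sub>R q) w (p + t *\<^sub>R q)
   = DR y p p w p + t * (DR y q p w p + DR y p q w p + DR y p p w q)
     + t^2 * (DR y q q w p + DR y q p w q + DR y p q w q) + t^3 * DR y q q w q"
  by (simp add: DR_add2 DR_add3 DR_add5 DR_sc2 DR_sc3 DR_sc5
      power2_eq_square eval_nat_numeral algebra_simps)

lemma all_zero:
  assumes hyp: "\<forall>x. g x x = -1 \<longrightarrow> F x = 0"
  shows "DR y x x w x = 0"
proof -
  define A where "A = g x x"
  define B where "B = g x X"
  define T where "T = \<bar>A\<bar> + 2 * \<bar>B\<bar> + 1"
  define P where "P = [:DR y x x w x, DR y X x w x + DR y x X w x + DR y x x w X,
      DR y X X w x + DR y X x w X + DR y x X w X, DR y X X w X:]"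
  have Pt: "poly P t = DR y (x + t *\<^sub>R X) (x + t *\<^sub>R X) w (x + t *\<^sub>R X)" for t
    by (simp add: P_def DR_line2 power2_eq_square eval_nat_numeral algebra_simps)
  have neg: "g (x + t *\<^sub>R X) (x + t *\<^sub>R X) < 0" if t: "t > T" for t
  proof -
    have gexp: "g (x + t *\<^sub>R X) (x + t *\<^sub>R X) = A + 2 * (t * B) - t * t"
      by (simp add: A_def B_def g_add1 g_add2 g_scale1 g_scale2 gXX g_sw[of X x] algebra_simps)
    have t1: "t \<ge> 1" using t by (simp add: T_def)
    have h1: "t - 2 * \<bar>B\<bar> \<ge> \<bar>A\<bar> + 1" using t by (simp add: T_def)
    have "t * (t - 2 * \<bar>B\<bar>) \<ge> 1 * (\<bar>A\<bar> + 1)"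
      by (rule mult_mono) (use t1 h1 in auto)
    then have h2: "t * t - 2 * (t * \<bar>B\<bar>) \<ge> \<bar>A\<bar> + 1" by (simp add: algebra_simps)
    have h3: "t * B \<le> t * \<bar>B\<bar>" using t1 by (intro mult_left_mono) auto
    have h4: "A \<le> \<bar>A\<bar>" by simp
    show ?thesis unfolding gexp using h2 h3 h4 by linarith
  qed
  have "P = 0"
  proof (rule ccontr)
    assume "P \<noteq> 0"
    then have "finite {t. poly P t = 0}" by (rule poly_roots_finite)
    moreover have "{T<..<T+1} \<subseteq> {t. poly P t = 0}"
    proof
      fix t assume "t \<in> {T<..<T+1}"
      then have "t > T" by simp
      then have "g (x + t *\<^sub>R X) (x + t *\<^sub>R X) < 0" by (rule neg)
      then show "t \<in> {t. poly P t = 0}" using timelike_zero[OF hyp] by (simp add: Pt)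
    qed
    ultimately have "finite {T<..<T+1}" by (rule finite_subset[rotated])
    then show False using infinite_Ioo[of T "T+1"] by simp
  qed
  then have "poly P 0 = 0" by simp
  then show ?thesis by (simp add: Pt)
qed

end

theorem lemma3p1:
  fixes g :: "real^'n \<Rightarrow> real^'n \<Rightarrow> real"
    and DR :: "real^'n \<Rightarrow> real^'n \<Rightarrow> real^'n \<Rightarrow> real^'n \<Rightarrow> real^'n \<Rightarrow> real"
  assumes "lorentzian g"
    and "CARD('n) \<ge> 3"
    and "cov_deriv_acT DR"
    and "\<exists>c. \<forall>x. g x x = -1 \<longrightarrow> lin_trace (szabo g DR x \<circ> szabo g DR x) = c"
  shows "\<forall>x. szabo g DR x = (\<lambda>y. 0)"
proof -
  have gl: "\<forall>y. linear (\<lambda>x. g x y)" and gs: "\<forall>x y. g x y = g y x"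
    using assms(1) unfolding lorentzian_def by blast+
  obtain e :: "'n \<Rightarrow> real^'n" and i0 where
    ep: "independent (range e)" "inj e" "span (range e) = UNIV"
      "\<forall>i j. g (e i) (e j) = (if i = j then (if i = i0 then -1 else 1) else 0)"
    using assms(1) unfolding lorentzian_def by blast
  interpret L: LS g DR e i0
    by unfold_locales (use gl gs ep assms(3) in auto)
  obtain c where hc: "\<forall>x. g x x = -1 \<longrightarrow> lin_trace (szabo g DR x \<circ> szabo g DR x) = c"
    using assms(4) by blast
  have hyp: "\<forall>x. g x x = -1 \<longrightarrow> L.F x = c" using hc L.trace_F by simp
  have "card L.JJ = CARD('n) - 1" by (simp add: L.JJ_def card_Diff_singleton)
  then have cJ: "card L.JJ \<ge> 1" using assms(2) by simp
  have "c = 0" by (rule L.c_zero[OF hyp cJ])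
  then have hyp0: "\<forall>x. g x x = -1 \<longrightarrow> L.F x = 0" using hyp by simp
  show ?thesis
  proof
    fix x
    show "szabo g DR x = (\<lambda>y. 0)"
    proof
      fix y
      have "szabo g DR x y = L.S x y" by (simp add: L.szabo_S)
      also have "\<dots> = 0" by (simp add: L.S_def L.all_zero[OF hyp0])
      finally show "szabo g DR x y = 0" .
    qed
  qed
qed

end
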